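(* Let $\alpha>-1$, $\beta>-1$, $c>0$, $\omega_{\alpha,\beta}(x)=(1-x)^{\alpha}(1+x)^{\beta}$, and $\mathcal{F}_c^{(\alpha,\beta)}[\phi](x)=\int_{-1}^{1}e^{c(xy-1)}\phi(y)\omega_{\alpha,\beta}(y)dy$ on $L^2((-1,1),\omega_{\alpha,\beta}(x)dx)$. Let $\psi_n^{(\alpha,\beta)}(\cdot;c)$ be an eigenfunction of $\mathcal{F}_c^{(\alpha,\beta)}$ with eigenvalue $\mu_n^{(\alpha,\beta)}(c)\ne0$, normalized so that $\int_{-1}^1(\psi_n^{(\alpha,\beta)}(x;c))^2\omega_{\alpha,\beta}(x)dx=(\mu_n^{(\alpha,\beta)}(c))^2$. Then for all $x\in(-1,1)$, $$|\psi_n^{(\alpha,\beta)}(x;c)|\le\frac{1}{\mathbf{P}_0^{(\alpha,\beta)}(x)}.$$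
   Context: $\mathbf{P}_0^{(\alpha,\beta)}$ is the normalized Jacobi polynomial of degree $0$, i.e. the constant $\mathbf{P}_0^{(\alpha,\beta)}=1/\sqrt{a_0^{\alpha,\beta}}$ with $a_0^{\alpha,\beta}=\int_{-1}^1\omega_{\alpha,\beta}(x)dx=\frac{2^{\alpha+\beta+1}\Gamma(\alpha+1)\Gamma(\beta+1)}{\Gamma(\alpha+\beta+2)}$, so that $\mathbf{P}_0^{(\alpha,\beta)}$ has unit norm in $L^2((-1,1),\omega_{\alpha,\beta}(x)dx)$. *)

theory Defs
  imports "HOL-Analysis.Analysis"
begin

definition jacobi_weight :: "real \<Rightarrow> real \<Rightarrow> real \<Rightarrow> real" where
  "jacobi_weight \<alpha> \<beta> x = (1 - x) powr \<alpha> * (1 + x) powr \<beta>"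

definition jacobi_a0 :: "real \<Rightarrow> real \<Rightarrow> real" where
  "jacobi_a0 \<alpha> \<beta> = (LINT y:{-1<..<1}|lborel. jacobi_weight \<alpha> \<beta> y)"

text \<open>normalized Jacobi polynomial of degree 0 (a constant function of x)\<close>
definition jacobi_P0 :: "real \<Rightarrow> real \<Rightarrow> real \<Rightarrow> real" where
  "jacobi_P0 \<alpha> \<beta> x = 1 / sqrt (jacobi_a0 \<alpha> \<beta>)"

definition F_transform :: "real \<Rightarrow> real \<Rightarrow> real \<Rightarrow> (real \<Rightarrow> real) \<Rightarrow> real \<Rightarrow> real" where
  "F_transform c \<alpha> \<beta> \<phi> x =
     (LINT y:{-1<..<1}|lborel. exp (c * (x * y - 1)) * \<phi> y * jacobi_weight \<alpha> \<beta> y)"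

end

theory Submission
  imports Defs
begin
lemma weight_meas[measurable]: "jacobi_weight \<alpha> \<beta> \<in> borel_measurable borel"
  unfolding jacobi_weight_def by measurable

lemma weight_integrable:
  assumes a: "\<alpha> > -1" and b: "\<beta> > -1"
  shows "set_integrable lborel {-1<..<1} (jacobi_weight \<alpha> \<beta>)"
proof -
  define f where "f t = t powr (\<beta>+1 - 1) * (1 - t) powr (\<alpha>+1 - 1)" for t :: real
  have "f integrable_on {0..1}" unfolding f_def
    by (rule integrable_Beta') (use a b in auto)
  hence "f integrable_on cbox 0 1" by simp
  from integrable_affinity[OF this, of "1/2" "1/2"]
  moreover have "(\<lambda>x. 2 * x - 1) ` {0..1} = {-1..(1::real)}"
    using image_affinity_atLeastAtMost[of 2 "-1" 0 "1::real"] by simp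
  ultimately have h: "(\<lambda>x. f ((1/2) * x + 1/2)) integrable_on {-1..1}" by simp
  have eq: "jacobi_weight \<alpha> \<beta> x = 2 powr (\<alpha>+\<beta>) * f ((1/2) * x + 1/2)" if "x \<in> {-1..1}" for x
  proof -
    have "(1/2) * x + 1/2 = (1+x)/2" "1 - ((1/2) * x + 1/2) = (1-x)/2" by auto
    moreover have "1 + x \<ge> 0" "1 - x \<ge> 0" using that by auto
    ultimately show ?thesis unfolding f_def jacobi_weight_def
      by (simp add: powr_divide powr_add field_simps)
  qed
  have "(\<lambda>x. 2 powr (\<alpha>+\<beta>) * f ((1/2) * x + 1/2)) integrable_on {-1..1}"
    using integrable_on_cmult_left[OF h] by simp
  hence "jacobi_weight \<alpha> \<beta> integrable_on {-1..1}"
    by (rule integrable_spike_finite[of "{}", rotated 2]) (auto simp: eq)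
  moreover have "jacobi_weight \<alpha> \<beta> x \<ge> 0" for x by (simp add: jacobi_weight_def)
  ultimately have "jacobi_weight \<alpha> \<beta> absolutely_integrable_on {-1..1}"
    by (subst absolutely_integrable_on_iff_nonneg) auto
  hence "set_integrable lborel {-1..1} (jacobi_weight \<alpha> \<beta>)"
    unfolding set_integrable_def by (subst (asm) integrable_completion) auto
  thus ?thesis by (rule set_integrable_subset) auto
qed

theorem proposition1:
  fixes \<alpha> \<beta> c \<mu> :: real and \<psi> :: "real \<Rightarrow> real"
  assumes "\<alpha> > -1" and "\<beta> > -1" and "c > 0"
    and "\<psi> \<in> borel_measurable lborel"
    and "set_integrable lborel {-1<..<1} (\<lambda>y. (\<psi> y)\<^sup>2 * jacobi_weight \<alpha> \<beta> y)"
    and "\<mu> \<noteq> 0"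
    and "\<forall>x\<in>{-1<..<1}. F_transform c \<alpha> \<beta> \<psi> x = \<mu> * \<psi> x"
    and "(LINT y:{-1<..<1}|lborel. (\<psi> y)\<^sup>2 * jacobi_weight \<alpha> \<beta> y) = \<mu>\<^sup>2"
    and "x \<in> {-1<..<1}"
  shows "\<bar>\<psi> x\<bar> \<le> 1 / jacobi_P0 \<alpha> \<beta> x"
proof -
  define W where "W = jacobi_weight \<alpha> \<beta>"
  define A where "A = jacobi_a0 \<alpha> \<beta>"
  define s where "s = \<bar>\<psi> x\<bar>"
  have Wnn: "W y \<ge> 0" for y by (simp add: W_def jacobi_weight_def)
  have WI: "set_integrable lborel {-1<..<1} W"
    unfolding W_def by (rule weight_integrable) (use assms in auto)
  have PI: "set_integrable lborel {-1<..<1} (\<lambda>y. (\<psi> y)\<^sup>2 * W y)"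
    using assms(5) by (simp add: W_def)
  have A_def': "A = (LINT y:{-1<..<1}|lborel. W y)" by (simp add: A_def W_def jacobi_a0_def)
  have Pint: "(LINT y:{-1<..<1}|lborel. (\<psi> y)\<^sup>2 * W y) = \<mu>\<^sup>2" using assms(8) by (simp add: W_def)
  have key: "\<bar>\<mu>\<bar> * s \<le> (t * \<mu>\<^sup>2 + A / t) / 2" if t: "t > 0" for t
  proof -
    have "\<bar>\<mu>\<bar> * s = \<bar>F_transform c \<alpha> \<beta> \<psi> x\<bar>"
      using assms(7,9) by (simp add: s_def abs_mult)
    also have "\<dots> = norm (integral\<^sup>L lborel (\<lambda>y. indicator {-1<..<1} y *\<^sub>R (exp (c * (x * y - 1)) * \<psi> y * W y)))"
      by (simp add: F_transform_def set_lebesgue_integral_def W_def)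
    also have "\<dots> \<le> (\<integral>y. norm (indicator {-1<..<1} y *\<^sub>R (exp (c * (x * y - 1)) * \<psi> y * W y)) \<partial>lborel)"
      by (rule integral_norm_bound)
    also have "\<dots> \<le> (\<integral>y. indicator {-1<..<1} y *\<^sub>R ((t * (\<psi> y)\<^sup>2 * W y + W y / t) / 2) \<partial>lborel)"
    proof (rule integral_mono')
      have "set_integrable lborel {-1<..<1} (\<lambda>y. (t * ((\<psi> y)\<^sup>2 * W y) + W y / t) / 2)"
        using PI WI by (intro set_integrable_divide set_integral_add(1) set_integrable_mult_right set_integrable_divide) auto
      then show "integrable lborel (\<lambda>y. indicator {-1<..<1} y *\<^sub>R ((t * (\<psi> y)\<^sup>2 * W y + W y / t) / 2))"
        unfolding set_integrable_def by (simp add: mult_ac)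
    next
      fix y :: real
      show "0 \<le> indicator {-1<..<1} y *\<^sub>R ((t * (\<psi> y)\<^sup>2 * W y + W y / t) / 2)"
        using t Wnn[of y] by (auto simp: indicator_def)
      show "norm (indicator {-1<..<1} y *\<^sub>R (exp (c * (x * y - 1)) * \<psi> y * W y))
            \<le> indicator {-1<..<1} y *\<^sub>R ((t * (\<psi> y)\<^sup>2 * W y + W y / t) / 2)"
      proof (cases "y \<in> {-1<..<1}")
        case True
        have xy: "x * y \<le> 1"
        proof -
          have "\<bar>x * y\<bar> \<le> 1" using True assms(9) by (auto simp: abs_mult intro!: mult_le_one)
          thus ?thesis by simp
        qed
        have e: "exp (c * (x * y - 1)) \<le> 1" using xy assms(3)
          by (simp add: mult_nonneg_nonpos)
        have amgm: "\<bar>\<psi> y\<bar> \<le> (t * (\<psi> y)\<^sup>2 + 1 / t) / 2"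
        proof -
          have "0 \<le> (t * \<bar>\<psi> y\<bar> - 1)\<^sup>2 / t" using t by simp
          also have "(t * \<bar>\<psi> y\<bar> - 1)\<^sup>2 / t = t * (\<psi> y)\<^sup>2 + 1 / t - 2 * \<bar>\<psi> y\<bar>"
            using t by (simp add: field_simps power2_eq_square)
          finally show ?thesis by simp
        qed
        have "\<bar>exp (c * (x * y - 1)) * \<psi> y * W y\<bar> = exp (c * (x * y - 1)) * (\<bar>\<psi> y\<bar> * W y)"
          using Wnn[of y] by (simp add: abs_mult)
        also have "\<dots> \<le> 1 * (\<bar>\<psi> y\<bar> * W y)"
          using e Wnn[of y] by (intro mult_right_mono) auto
        also have "\<dots> \<le> ((t * (\<psi> y)\<^sup>2 + 1 / t) / 2) * W y"
          using mult_right_mono[OF amgm Wnn[of y]] by (simp add: mult_ac)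
        also have "\<dots> = (t * (\<psi> y)\<^sup>2 * W y + W y / t) / 2" by (simp add: field_simps)
        finally show ?thesis using True by simp
      qed simp
    qed
    also have "\<dots> = (LINT y:{-1<..<1}|lborel. (t * ((\<psi> y)\<^sup>2 * W y) + W y / t) / 2)"
      by (simp add: set_lebesgue_integral_def mult_ac)
    also have "\<dots> = (t * \<mu>\<^sup>2 + A / t) / 2"
      using PI WI by (simp add: set_integral_add set_integrable_mult_right set_integral_mult_right
          set_integral_divide_zero Pint A_def')
    finally show ?thesis .
  qed
  have "s\<^sup>2 \<le> A"
  proof (cases "s = 0")
    case True
    have "A \<ge> 0" unfolding A_def' set_lebesgue_integral_def by (rule Bochner_Integration.integral_nonneg) (simp add: Wnn)
    thus ?thesis using True by simp
  next
    case False
    hence sp: "s > 0" using s_def by simp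
    have m: "\<bar>\<mu>\<bar> > 0" using assms(6) by simp
    from key[of "s / \<bar>\<mu>\<bar>"] sp m
    have "\<bar>\<mu>\<bar> * s \<le> (s / \<bar>\<mu>\<bar> * \<mu>\<^sup>2 + A / (s / \<bar>\<mu>\<bar>)) / 2" by simp
    also have "s / \<bar>\<mu>\<bar> * \<mu>\<^sup>2 = \<bar>\<mu>\<bar> * s" using m by (simp add: power2_eq_square field_simps)
    also have "A / (s / \<bar>\<mu>\<bar>) = \<bar>\<mu>\<bar> * (A / s)" using m sp by (simp add: field_simps)
    finally have "\<bar>\<mu>\<bar> * s \<le> \<bar>\<mu>\<bar> * (A / s)" by (simp add: mult.commute)
    hence "s \<le> A / s" using m mult_le_cancel_left_pos[of "\<bar>\<mu>\<bar>" s "A / s"] by simp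
    thus ?thesis using sp by (simp add: field_simps power2_eq_square)
  qed
  hence "s \<le> sqrt A" using real_le_rsqrt s_def by auto
  thus ?thesis by (simp add: s_def jacobi_P0_def A_def)
qed
end
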